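(* Let $n \ge 3$ and let $\vec{x} = [x_t]_{t=0}^{n-1}$ and $\vec{q} = [q_t]_{t=0}^{n-1}$ be real-valued sequences, with discrete Fourier transforms $\vec{X}$ and $\vec{Q}$ defined by $$X_f = \frac{1}{\sqrt{n}} \sum_{t=0}^{n-1} x_t e^{-j 2\pi t f / n}, \qquad Q_f = \frac{1}{\sqrt{n}} \sum_{t=0}^{n-1} q_t e^{-j 2\pi t f / n}, \qquad f = 0, 1, \ldots, n-1,$$ where $j = \sqrt{-1}$. Let $D(\vec{x},\vec{q}) = \left(\sum_{t=0}^{n-1} |x_t - q_t|^2\right)^{1/2}$ be the Euclidean distance, and let $\epsilon > 0$. Let $k$ be an integer with $1 \le k < n/2$. If $D(\vec{x},\vec{q}) < \epsilon$, then $|X_0 - Q_0| < \epsilon$ and $$|X_f - Q_f| < \frac{\epsilon}{\sqrt{2}} \qquad \text{for all } f = 1, \ldots, k.$$ In particular, the axis-parallel box in the feature space of the first $k+1$ DFT coefficients that is centered at $(Q_0, Q_1, \ldots, Q_k)$ and has side $2\epsilon$ in the coordinate of $X_0$ and side $\sqrt{2}\,\epsilon$ in each real coordinate of $X_1, \ldots, X_k$ contains $(X_0, X_1, \ldots, X_k)$ for every $\vec{x}$ with $D(\vec{x},\vec{q}) < \epsilon$.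
   Context: The time sequences are real-valued. The real coordinates of a complex coefficient $X_f$ are its real and imaginary parts. For a real-valued sequence, $X_0$ is a real number. *)

theory Defs
  imports Complex_Main
begin

definition dft :: "nat \<Rightarrow> (nat \<Rightarrow> real) \<Rightarrow> nat \<Rightarrow> complex" where
  "dft n x f = complex_of_real (1 / sqrt (real n)) *
     (\<Sum>t<n. complex_of_real (x t) *
        exp (- \<i> * complex_of_real (2 * pi * real t * real f / real n)))"

definition eucl_dist :: "nat \<Rightarrow> (nat \<Rightarrow> real) \<Rightarrow> (nat \<Rightarrow> real) \<Rightarrow> real" where
  "eucl_dist n x q = sqrt (\<Sum>t<n. \<bar>x t - q t\<bar> ^ 2)"

end

theory Submission
  imports Defs
begin

lemma geo_zero:
  fixes a :: real and n :: nat
  assumes "0 < a" "a < 2*pi" "cis (real n * a) = 1"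
  shows "(\<Sum>t<n. cis (real t * a)) = 0"
proof -
  have ne: "cis a \<noteq> 1"
  proof
    assume "cis a = 1"
    then have "cos a = 1" using arg_cong[of _ _ Re] by (metis cis.sel(1) one_complex.sel(1))
    then obtain m :: int where m: "a = real_of_int m * 2 * pi" using cos_one_2pi_int by blast
    then have "0 < real_of_int m" "real_of_int m < 1" using assms(1,2) pi_gt_zero
      by (auto simp: zero_less_mult_iff)
    then have "0 < m" "m < 1" by simp_all
    then show False by linarith
  qed
  have "(\<Sum>t<n. cis (real t * a)) = (\<Sum>t<n. cis a ^ t)" by (simp add: DeMoivre)
  also have "\<dots> = (cis a ^ n - 1) / (cis a - 1)" using geometric_sum[OF ne] by simp
  also have "cis a ^ n = 1" using assms(3) by (simp add: DeMoivre)
  finally show ?thesis by simp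
qed

lemma cos_sin_sums:
  fixes a :: real and n :: nat
  assumes "0 < a" "a < pi" "cis (real n * a) = 1"
  shows "(\<Sum>t<n. cos (real t * a)^2) = real n / 2"
    and "(\<Sum>t<n. sin (real t * a)^2) = real n / 2"
    and "(\<Sum>t<n. cos (real t * a) * sin (real t * a)) = 0"
proof -
  have c2: "cis (real n * (2*a)) = 1"
  proof -
    have "cis (real n * (2*a)) = cis (real n * a) ^ 2" by (simp add: DeMoivre mult_ac)
    then show ?thesis using assms(3) by simp
  qed
  have g: "(\<Sum>t<n. cis (real t * (2*a))) = 0" using geo_zero[OF _ _ c2] assms by auto
  have C: "(\<Sum>t<n. cos (2 * (real t * a))) = 0"
    using arg_cong[OF g, of Re] by (simp add: mult_ac)
  have S: "(\<Sum>t<n. sin (2 * (real t * a))) = 0"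
    using arg_cong[OF g, of Im] by (simp add: mult_ac)
  have "(\<Sum>t<n. cos (real t * a)^2) = (\<Sum>t<n. (1 + cos (2 * (real t * a))) / 2)"
    by (intro sum.cong) (auto simp: cos_double_cos)
  also have "\<dots> = real n / 2" using C by (simp add: sum_divide_distrib[symmetric] sum.distrib)
  finally show "(\<Sum>t<n. cos (real t * a)^2) = real n / 2" .
  have "(\<Sum>t<n. sin (real t * a)^2) = (\<Sum>t<n. (1 - cos (2 * (real t * a))) / 2)"
    by (intro sum.cong) (auto simp: cos_double_sin)
  also have "\<dots> = real n / 2" using C by (simp add: sum_divide_distrib[symmetric] sum_subtractf)
  finally show "(\<Sum>t<n. sin (real t * a)^2) = real n / 2" .
  have "(\<Sum>t<n. cos (real t * a) * sin (real t * a)) = (\<Sum>t<n. sin (2 * (real t * a)) / 2)"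
    by (intro sum.cong) (auto simp: sin_double)
  also have "\<dots> = 0" using S by (simp add: sum_divide_distrib[symmetric])
  finally show "(\<Sum>t<n. cos (real t * a) * sin (real t * a)) = 0" .
qed

lemma bessel2:
  fixes d c s :: "nat \<Rightarrow> real" and n :: nat and N :: real
  assumes "N > 0" "(\<Sum>t<n. c t^2) = N" "(\<Sum>t<n. s t^2) = N" "(\<Sum>t<n. c t * s t) = 0"
  shows "(\<Sum>t<n. d t * c t)^2 + (\<Sum>t<n. d t * s t)^2 \<le> N * (\<Sum>t<n. d t^2)"
proof -
  define A where "A = (\<Sum>t<n. d t * c t)"
  define B where "B = (\<Sum>t<n. d t * s t)"
  define m where "m = 1 / N"
  have "0 \<le> (\<Sum>t<n. (d t - m * (A * c t + B * s t))^2)" by (simp add: sum_nonneg)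
  also have "\<dots> = (\<Sum>t<n. d t^2) - 2*m*(A * (\<Sum>t<n. d t * c t) + B * (\<Sum>t<n. d t * s t))
     + m^2 * (A^2 * (\<Sum>t<n. c t^2) + 2*A*B*(\<Sum>t<n. c t * s t) + B^2 * (\<Sum>t<n. s t^2))"
    by (simp add: power2_eq_square algebra_simps sum.distrib sum_subtractf sum_distrib_left)
  also have "\<dots> = (\<Sum>t<n. d t^2) - (A^2 + B^2) / N"
    using assms unfolding A_def[symmetric] B_def[symmetric] m_def
    by (simp add: power2_eq_square field_simps)
  finally show ?thesis using assms(1) unfolding A_def B_def by (simp add: field_simps)
qed

lemma bessel1:
  fixes d c :: "nat \<Rightarrow> real" and n :: nat and N :: real
  assumes "N > 0" "(\<Sum>t<n. c t^2) = N"
  shows "(\<Sum>t<n. d t * c t)^2 \<le> N * (\<Sum>t<n. d t^2)"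
proof -
  define A where "A = (\<Sum>t<n. d t * c t)"
  define m where "m = 1 / N"
  have "0 \<le> (\<Sum>t<n. (d t - m * (A * c t))^2)" by (simp add: sum_nonneg)
  also have "\<dots> = (\<Sum>t<n. d t^2) - 2*m*(A * (\<Sum>t<n. d t * c t))
     + m^2 * (A^2 * (\<Sum>t<n. c t^2))"
    by (simp add: power2_eq_square algebra_simps sum.distrib sum_subtractf sum_distrib_left)
  also have "\<dots> = (\<Sum>t<n. d t^2) - A^2 / N"
    using assms unfolding A_def[symmetric] m_def
    by (simp add: power2_eq_square field_simps)
  finally show ?thesis using assms(1) unfolding A_def by (simp add: field_simps)
qed

lemma dft_diff:
  "dft n x f - dft n q f = complex_of_real (1 / sqrt (real n)) *
     (\<Sum>t<n. complex_of_real (x t - q t) * cis (- (real t * (2 * pi * real f / real n))))"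
  unfolding dft_def
  by (simp add: cis_conv_exp right_diff_distrib[symmetric] sum_subtractf[symmetric] diff_divide_distrib[symmetric]
        left_diff_distrib mult_ac)

lemma dft_diff_Re_Im:
  "Re (dft n x f - dft n q f) = (1 / sqrt (real n)) * (\<Sum>t<n. (x t - q t) * cos (real t * (2 * pi * real f / real n)))"
  "Im (dft n x f - dft n q f) = - (1 / sqrt (real n)) * (\<Sum>t<n. (x t - q t) * sin (real t * (2 * pi * real f / real n)))"
  unfolding dft_diff by (simp_all add: Re_sum Im_sum sum_negf)

lemma cmod_sq:
  "cmod z ^ 2 = Re z ^ 2 + Im z ^ 2"
  by (simp add: cmod_def)

lemma bound_f:
  fixes n f :: nat and x q :: "nat \<Rightarrow> real"
  assumes "1 \<le> f" "real f < real n / 2"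
  shows "cmod (dft n x f - dft n q f) ^ 2 \<le> (\<Sum>t<n. (x t - q t)^2) / 2"
proof -
  define a where "a = 2 * pi * real f / real n"
  have n0: "real n > 0" using assms by linarith
  have a0: "0 < a" using assms n0 unfolding a_def by simp
  have a1: "a < pi" using assms n0 unfolding a_def by (simp add: field_simps)
  have "cis (real n * a) = cis (2 * pi) ^ f" using n0 unfolding a_def by (simp add: DeMoivre mult_ac)
  then have c: "cis (real n * a) = 1" by simp
  note cs = cos_sin_sums[OF a0 a1 c]
  define A where "A = (\<Sum>t<n. (x t - q t) * cos (real t * a))"
  define B where "B = (\<Sum>t<n. (x t - q t) * sin (real t * a))"
  have AB: "A^2 + B^2 \<le> real n / 2 * (\<Sum>t<n. (x t - q t)^2)"
    unfolding A_def B_def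
    by (rule bessel2[where c = "\<lambda>t. cos (real t * a)" and s = "\<lambda>t. sin (real t * a)"]) (use cs n0 in auto)
  have "cmod (dft n x f - dft n q f) ^ 2 = (A^2 + B^2) / real n"
    unfolding cmod_sq dft_diff_Re_Im A_def[unfolded a_def] B_def[unfolded a_def] a_def
    using n0 by (simp add: power2_eq_square field_simps)
  also have "\<dots> \<le> (\<Sum>t<n. (x t - q t)^2) / 2" using AB n0 by (simp add: field_simps)
  finally show ?thesis .
qed

lemma bound_0:
  fixes n :: nat and x q :: "nat \<Rightarrow> real"
  assumes "n > 0"
  shows "cmod (dft n x 0 - dft n q 0) ^ 2 \<le> (\<Sum>t<n. (x t - q t)^2)"
proof -
  have n0: "real n > 0" using assms by simp
  have "(\<Sum>t<n. (x t - q t) * 1)^2 \<le> real n * (\<Sum>t<n. (x t - q t)^2)"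
    by (rule bessel1) (use n0 in auto)
  then show ?thesis
    unfolding cmod_sq dft_diff_Re_Im using n0 by (simp add: power2_eq_square field_simps)
qed

theorem mainTheorem1:
  fixes n k :: nat and x q :: "nat \<Rightarrow> real" and \<epsilon> :: real
  assumes "n \<ge> 3"
    and "\<epsilon> > 0"
    and "1 \<le> k" and "real k < real n / 2"
    and "eucl_dist n x q < \<epsilon>"
  shows "cmod (dft n x 0 - dft n q 0) < \<epsilon>
       \<and> (\<forall>f\<in>{1..k}. cmod (dft n x f - dft n q f) < \<epsilon> / sqrt 2)
       \<and> \<bar>Re (dft n x 0) - Re (dft n q 0)\<bar> < \<epsilon>
       \<and> (\<forall>f\<in>{1..k}. \<bar>Re (dft n x f) - Re (dft n q f)\<bar> < \<epsilon> / sqrt 2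
                     \<and> \<bar>Im (dft n x f) - Im (dft n q f)\<bar> < \<epsilon> / sqrt 2)"
proof -
  define S where "S = (\<Sum>t<n. (x t - q t)^2)"
  have S0: "S \<ge> 0" unfolding S_def by (simp add: sum_nonneg)
  have "sqrt S < \<epsilon>" using assms(5) unfolding eucl_dist_def S_def by simp
  then have Se: "S < \<epsilon>^2" using S0 assms(2) by (metis real_sqrt_less_iff real_sqrt_pow2_iff power2_less_imp_less abs_of_pos real_sqrt_abs real_sqrt_less_mono real_less_rsqrt)
  have z: "cmod (dft n x 0 - dft n q 0) < \<epsilon>"
  proof -
    have "cmod (dft n x 0 - dft n q 0) ^ 2 < \<epsilon>^2" using bound_0[of n x q] assms(1) Se unfolding S_def by simp
    then show ?thesis using assms(2) by (simp add: power2_less_imp_less)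
  qed
  have fb: "cmod (dft n x f - dft n q f) < \<epsilon> / sqrt 2" if f: "f \<in> {1..k}" for f
  proof -
    have "cmod (dft n x f - dft n q f) ^ 2 < (\<epsilon> / sqrt 2)^2"
      using bound_f[of f n x q] f assms(4) Se unfolding S_def by (simp add: power_divide)
    then show ?thesis using assms(2) by (simp add: power2_less_imp_less)
  qed
  have re: "\<bar>Re z\<bar> \<le> cmod z" "\<bar>Im z\<bar> \<le> cmod z" for z by (rule abs_Re_le_cmod, rule abs_Im_le_cmod)
  show ?thesis
    using z fb re[of "dft n x 0 - dft n q 0"] re[of "dft n x f - dft n q f" for f]
    by (smt (verit) minus_complex.sel)
qed

end
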